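(* Let $g\ge1$. For every $f\in\mathrm{Sp}(g,\mathbb{R})$, $(s(f))^2=(-1)^{n(f)}$.
   Context: Let $V=\mathbb{R}^{2g}$ with standard basis $p_1,\dots,p_g,q_1,\dots,q_g$ and symplectic form $\omega$ with $\omega(p_i,p_j)=\omega(q_i,q_j)=0$, $\omega(p_i,q_j)=-\omega(q_i,p_j)=\delta_{ij}$. $\mathrm{Sp}(g,\mathbb{R})$ is the group of linear isometries of $(V,\omega)$. A lagrangian is a subspace equal to its own $\omega$-orthogonal; $\lambda_0=\mathrm{span}\{p_1,\dots,p_g\}$. Definition of $s$: for oriented lagrangians $\lambda_1,\lambda_2$ of a real symplectic space, let $\kappa=\lambda_1\cap\lambda_2$. If $\kappa=0$, $\epsilon(\lambda_1,\lambda_2)=\mathrm{sgn}\det(\omega(a_i,b_j))$ for positive bases $(a_i)$ of $\lambda_1$, $(b_j)$ of $\lambda_2$. If $\kappa\neq0$, orient $\kappa$ arbitrarily, orient $\lambda_i/\kappa$ so that a positive basis of $\kappa$ followed by lifts of a positive basis of $\lambda_i/\kappa$ is positive in $\lambda_i$, and set $\epsilon(\lambda_1,\lambda_2)=\epsilon(\lambda_1/\kappa,\lambda_2/\kappa)$ in $\kappa^\perp/\kappa$; if $\lambda_1=\lambda_2$, $\epsilon=\pm1$ according as orientations agree or not. Put $s(\lambda_1,\lambda_2)=i^{\dim\lambda_1-\dim\kappa}\epsilon(\lambda_1,\lambda_2)$, and $s(f)=s(\lambda_0,f(\lambda_0))$ with $\lambda_0$ arbitrarily oriented and $f(\lambda_0)$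 given the image orientation. Definition of $n$: for $f\in\mathrm{Sp}(g,\mathbb{R})$, $\star_f$ is the nonsingular bilinear form on $(f-1)V$ with $a\star_f b=\omega(x,b)$ where $(f-1)x=a$; $\mathrm{sgn}[\det(\star_f)]\in\{\pm1\}$ is the sign of the determinant of its Gram matrix (equal to $1$ for $f=\mathrm{Id}$); $\star_{f,\lambda_0}$ is its (symmetric) restriction to $\lambda_0\cap(f-1)V$. Then $n(f)=\mathrm{Signature}(\star_{f,\lambda_0})-\dim((f-1)V)-\mathrm{sgn}[\det(\star_f)]+1$. *)

theory Defs
  imports "HOL-Analysis.Analysis"
begin

text \<open>V = R^(2g) realised as (real^'g) x (real^'g): first component = p-coordinates,
  second component = q-coordinates. g = CARD('g) >= 1 automatically.\<close>

type_synonym 'g sympvec = "(real^'g) \<times> (real^'g)"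

definition omega :: "'g::finite sympvec \<Rightarrow> 'g sympvec \<Rightarrow> real" where
  "omega u v = fst u \<bullet> snd v - snd u \<bullet> fst v"

definition symplectic :: "('g::finite sympvec \<Rightarrow> 'g sympvec) \<Rightarrow> bool" where
  "symplectic f \<longleftrightarrow> linear f \<and> (\<forall>x y. omega (f x) (f y) = omega x y)"

definition lagrangian :: "'g::finite sympvec set \<Rightarrow> bool" where
  "lagrangian L \<longleftrightarrow> subspace L \<and> L = {x. \<forall>y\<in>L. omega x y = 0}"

definition lambda0 :: "'g::finite sympvec set" where
  "lambda0 = {x. snd x = 0}"

definition ldet :: "nat \<Rightarrow> (nat \<Rightarrow> nat \<Rightarrow> real) \<Rightarrow> real" where
  "ldet m M = (\<Sum>p | p permutes {..<m}. of_int (sign p) * (\<Prod>i<m. M i (p i)))"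

definition basis_list :: "'g::finite sympvec set \<Rightarrow> 'g sympvec list \<Rightarrow> bool" where
  "basis_list L bs \<longleftrightarrow> distinct bs \<and> independent (set bs) \<and> span (set bs) = L"

definition same_orient :: "'g::finite sympvec list \<Rightarrow> 'g sympvec list \<Rightarrow> bool" where
  "same_orient a b \<longleftrightarrow> length a = length b \<and>
     (\<exists>M. (\<forall>j<length b. b ! j = (\<Sum>i<length a. M i j *\<^sub>R a ! i)) \<and> ldet (length a) M > 0)"

text \<open>epsilon(lambda1, lambda2) for oriented lagrangians (L1 oriented by basis a, L2 by basis b).
  kappa = L1 \<inter> L2 oriented by basis c; lifts a', b' of positive bases of L1/kappa, L2/kappa
  are such that c@a', c@b' are positive bases; the induced form on kappa^perp/kappa is
  evaluated on these lifts.\<close>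
definition eps :: "'g::finite sympvec set \<Rightarrow> 'g sympvec list \<Rightarrow> 'g sympvec set \<Rightarrow> 'g sympvec list \<Rightarrow> real" where
  "eps L1 a L2 b =
    (if L1 = L2 then (if same_orient a b then 1 else -1)
     else (case (SOME (c, a', b'). basis_list (L1 \<inter> L2) c
                   \<and> basis_list L1 (c @ a') \<and> same_orient (c @ a') a
                   \<and> basis_list L2 (c @ b') \<and> same_orient (c @ b') b) of
           (c, a', b') \<Rightarrow> sgn (ldet (length a') (\<lambda>i j. omega (a' ! i) (b' ! j)))))"

definition s_lag :: "'g::finite sympvec set \<Rightarrow> 'g sympvec list \<Rightarrow> 'g sympvec set \<Rightarrow> 'g sympvec list \<Rightarrow> complex" where
  "s_lag L1 a L2 b = \<i> ^ (dim L1 - dim (L1 \<inter> L2)) * complex_of_real (eps L1 a L2 b)"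

definition s_of :: "('g::finite sympvec \<Rightarrow> 'g sympvec) \<Rightarrow> complex" where
  "s_of f = (let a = (SOME a. basis_list (lambda0 :: 'g sympvec set) a)
             in s_lag lambda0 a (f ` lambda0) (map f a))"

definition imgW :: "('g::finite sympvec \<Rightarrow> 'g sympvec) \<Rightarrow> 'g sympvec set" where
  "imgW f = range (\<lambda>x. f x - x)"

definition star :: "('g::finite sympvec \<Rightarrow> 'g sympvec) \<Rightarrow> 'g sympvec \<Rightarrow> 'g sympvec \<Rightarrow> real" where
  "star f a b = omega (SOME x. f x - x = a) b"

definition sgn_det_star :: "('g::finite sympvec \<Rightarrow> 'g sympvec) \<Rightarrow> int" where
  "sgn_det_star f = (let w = (SOME w. basis_list (imgW f) w);
                         d = ldet (length w) (\<lambda>i j. star f (w ! i) (w ! j))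
                     in if d > 0 then 1 else if d < 0 then -1 else 0)"

definition signature :: "('g::finite sympvec \<Rightarrow> 'g sympvec \<Rightarrow> real) \<Rightarrow> 'g sympvec set \<Rightarrow> int" where
  "signature B U =
     int (Max {dim S | S. subspace S \<and> S \<subseteq> U \<and> (\<forall>x\<in>S. x \<noteq> 0 \<longrightarrow> B x x > 0)})
   - int (Max {dim S | S. subspace S \<and> S \<subseteq> U \<and> (\<forall>x\<in>S. x \<noteq> 0 \<longrightarrow> B x x < 0)})"

definition n_of :: "('g::finite sympvec \<Rightarrow> 'g sympvec) \<Rightarrow> int" where
  "n_of f = signature (star f) (lambda0 \<inter> imgW f) - int (dim (imgW f)) - sgn_det_star f + 1"

end

theory Submission
  imports Defs "Jordan_Normal_Form.Determinant"
begin


lemma DIM_sv: "DIM('g::finite sympvec) = 2 * CARD('g)"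
  by simp

definition J :: "'g::finite sympvec \<Rightarrow> 'g sympvec" where "J y = (snd y, - fst y)"

lemma omega_J: "omega x y = x \<bullet> J y"
  by (cases x) (simp add: omega_def J_def inner_commute)

lemma linear_J: "linear J"
  unfolding J_def by (intro linearI) (auto simp: algebra_simps)

lemma inj_J: "inj J"
  unfolding J_def inj_def by auto

lemma omega_add_left: "omega (x + y) z = omega x z + omega y z"
  by (simp add: omega_J inner_add_left)
lemma omega_add_right: "omega z (x + y) = omega z x + omega z y"
  by (simp add: omega_def inner_add_left inner_add_right)
lemma omega_scale_left: "omega (c *\<^sub>R x) z = c * omega x z"
  by (simp add: omega_J)
lemma omega_scale_right: "omega z (c *\<^sub>R x) = c * omega z x"
  by (simp add: omega_def algebra_simps)
lemma omega_diff_left: "omega (x - y) z = omega x z - omega y z"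
  by (simp add: omega_J inner_diff_left)
lemma omega_diff_right: "omega z (x - y) = omega z x - omega z y"
  by (simp add: omega_def inner_diff_left inner_diff_right)
lemma omega_neg_left: "omega (- x) z = - omega x z"
  by (simp add: omega_J)
lemma omega_neg_right: "omega z (- x) = - omega z x"
  by (simp add: omega_def)
lemma omega_zero_left[simp]: "omega 0 z = 0" by (simp add: omega_def)
lemma omega_zero_right[simp]: "omega z 0 = 0" by (simp add: omega_def)
lemma omega_anti: "omega x y = - omega y x"
  by (simp add: omega_def inner_commute)
lemma omega_self[simp]: "omega x x = 0"
  by (simp add: omega_def inner_commute)
lemma linear_omega_left: "linear (\<lambda>x. omega x y)"
  by (intro linearI) (simp_all add: omega_add_left omega_scale_left)
lemma linear_omega_right: "linear (\<lambda>y. omega x y)"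
  by (intro linearI) (simp_all add: omega_add_right omega_scale_right)
lemma omega_sum_left: "omega (\<Sum>i\<in>A. u i) z = (\<Sum>i\<in>A. omega (u i) z)"
  by (induction A rule: infinite_finite_induct) (auto simp: omega_add_left)
lemma omega_sum_right: "omega z (\<Sum>i\<in>A. u i) = (\<Sum>i\<in>A. omega z (u i))"
  by (induction A rule: infinite_finite_induct) (auto simp: omega_add_right)

lemma omega_nondeg: "(\<And>y. omega x y = 0) \<Longrightarrow> x = 0"
proof -
  assume h: "\<And>y. omega x y = 0"
  have "omega x (- snd x, fst x) = x \<bullet> x" by (simp add: omega_J J_def)
  with h[of "(- snd x, fst x)"] show "x = 0" by simp
qed

definition operp :: "'g::finite sympvec set \<Rightarrow> 'g sympvec set" where
  "operp S = {x. \<forall>y\<in>S. omega x y = 0}"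

lemma subspace_operp: "subspace (operp S)"
  unfolding operp_def subspace_def by (auto simp: omega_add_left omega_scale_left)

lemma operp_J: "operp S = {y. \<forall>x\<in>J ` S. Linear_Algebra.orthogonal x y}"
  unfolding operp_def Linear_Algebra.orthogonal_def by (auto simp: omega_J inner_commute)

lemma dim_J: "dim (J ` S) = dim S"
  using dim_image_eq[OF linear_J] inj_J by (metis inj_on_subset subset_UNIV)

lemma dim_operp: fixes S :: "'g::finite sympvec set" assumes "subspace S" shows "dim (operp S) + dim S = 2 * CARD('g)"
proof -
  have "subspace (J ` S)" using linear_subspace_image[OF linear_J assms] .
  from dim_subspace_orthogonal_to_vectors[OF this subspace_UNIV subset_UNIV]
  show ?thesis unfolding operp_J by (simp add: dim_J)
qed

lemma operp_operp: assumes "subspace S" shows "operp (operp S) = S"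
proof -
  have "S \<subseteq> operp (operp S)" unfolding operp_def
  proof (intro subsetI CollectI ballI)
    fix x y assume "x \<in> S" "y \<in> {x. \<forall>y\<in>S. omega x y = 0}"
    hence "omega y x = 0" by auto
    thus "omega x y = 0" by (subst omega_anti) simp
  qed
  moreover have "dim (operp (operp S)) = dim S" using dim_operp[OF assms] dim_operp[OF subspace_operp, of S] by simp
  ultimately show ?thesis using subspace_dim_equal[OF assms subspace_operp] by (metis order_refl)
qed

lemma operp_mono: "S \<subseteq> T \<Longrightarrow> operp T \<subseteq> operp S"
  unfolding operp_def by auto

lemma operp_UNIV: "operp UNIV = {0}"
  unfolding operp_def using omega_nondeg by auto



lemma rank_nullity:
  fixes f :: "'a::euclidean_space \<Rightarrow> 'b::euclidean_space"
  assumes lf: "linear f" and S: "subspace S"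
  shows "dim (f ` S) + dim (S \<inter> {x. f x = 0}) = dim S"
proof -
  define K where "K = S \<inter> {x. f x = 0}"
  have sK: "subspace K" unfolding K_def
    using S lf by (auto simp: subspace_def linear_0 linear_add linear_scale)
  have KS: "K \<subseteq> S" unfolding K_def by auto
  define T where "T = {y \<in> S. \<forall>x \<in> K. Linear_Algebra.orthogonal x y}"
  have dT: "dim T + dim K = dim S" unfolding T_def
    using dim_subspace_orthogonal_to_vectors[OF sK S KS] .
  have "T = S \<inter> orthogonal_comp K" unfolding T_def orthogonal_comp_def by auto
  hence sT: "subspace T" using subspace_inter[OF S subspace_orthogonal_comp] by simp
  have injT: "inj_on f (span T)"
  proof (rule inj_onI)
    fix x y assume xy: "x \<in> span T" "y \<in> span T" "f x = f y"
    have "x \<in> T" "y \<in> T" using xy(1,2) span_eq_iff[THEN iffD2, OF sT] by auto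
    hence "x - y \<in> T" using sT by (simp add: subspace_diff)
    moreover have "f (x - y) = 0" using xy lf by (simp add: linear_diff)
    ultimately have "x - y \<in> K" "x - y \<in> T" unfolding K_def T_def by auto
    hence "Linear_Algebra.orthogonal (x - y) (x - y)" unfolding T_def by auto
    thus "x = y" by (simp add: Linear_Algebra.orthogonal_self)
  qed
  have fTS: "f ` T = f ` S"
  proof
    show "f ` T \<subseteq> f ` S" unfolding T_def by auto
    show "f ` S \<subseteq> f ` T"
    proof
      fix v assume "v \<in> f ` S"
      then obtain s where s: "s \<in> S" "v = f s" by auto
      obtain y z where yz: "y \<in> span K" "\<And>w. w \<in> span K \<Longrightarrow> Linear_Algebra.orthogonal z w" "s = y + z"
        using orthogonal_subspace_decomp_exists[of K s] by blast
      have yK: "y \<in> K" using yz(1) span_eq_iff[THEN iffD2, OF sK] by auto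
      have zS: "z = s - y" using yz(3) by simp
      have "z \<in> S" using zS s(1) yK KS S by (auto intro: subspace_diff)
      moreover have "\<forall>x\<in>K. Linear_Algebra.orthogonal x z" using yz(2) span_superset Linear_Algebra.orthogonal_commute by blast
      ultimately have "z \<in> T" unfolding T_def by auto
      moreover have "f z = f s" using zS yK lf unfolding K_def by (simp add: linear_diff)
      ultimately show "v \<in> f ` T" using s by (metis image_eqI)
    qed
  qed
  have "dim (f ` T) = dim T" using dim_image_eq[OF lf injT] .
  hence "dim (f ` S) = dim T" by (simp only: fTS)
  thus ?thesis using dT unfolding K_def by linarith
qed

lemma span_sub: "subspace S \<Longrightarrow> span S = S" by simp

lemma sum_set_nth:
  assumes "distinct bs"
  shows "(\<Sum>x\<in>set bs. g x) = (\<Sum>j<length bs. g (bs ! j))"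
proof -
  have "set bs = (!) bs ` {..<length bs}" by (auto simp: in_set_conv_nth)
  moreover have "inj_on ((!) bs) {..<length bs}" using assms by (simp add: inj_on_nth)
  ultimately show ?thesis by (simp add: sum.reindex)
qed

lemma bl_subspace: "basis_list L bs \<Longrightarrow> subspace L"
  unfolding basis_list_def by auto

lemma bl_set: "basis_list L bs \<Longrightarrow> set bs \<subseteq> L"
  unfolding basis_list_def using span_superset by blast

lemma bl_length: assumes "basis_list L bs" shows "length bs = dim L"
proof -
  have d: "distinct bs" and ind: "independent (set bs)" and sp: "span (set bs) = L"
    using assms unfolding basis_list_def by auto
  have "dim L = card (set bs)" using dim_span_eq_card_independent[OF ind] sp by simp
  thus ?thesis using distinct_card[OF d] by simp
qed

lemma bl_indep:
  assumes "basis_list L bs" "(\<Sum>j<length bs. v j *\<^sub>R bs ! j) = 0" "j < length bs"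
  shows "v j = 0"
proof -
  let ?n = "length bs"
  have d: "distinct bs" and ind: "independent (set bs)" using assms(1) unfolding basis_list_def by auto
  define c where "c = v \<circ> inv_into {..<?n} ((!) bs)"
  have inj: "inj_on ((!) bs) {..<?n}" using d by (simp add: inj_on_nth)
  have cj: "c (bs ! i) = v i" if "i < ?n" for i unfolding c_def using inj that by (simp add: inv_into_f_f)
  have "(\<Sum>x\<in>set bs. c x *\<^sub>R x) = (\<Sum>i<?n. c (bs ! i) *\<^sub>R bs ! i)" by (rule sum_set_nth[OF d])
  also have "\<dots> = 0" using assms(2) by (simp add: cj)
  finally have "\<forall>x\<in>set bs. c x = 0" using ind by (simp add: independent_explicit)
  hence "c (bs ! j) = 0" using assms(3) by auto
  thus ?thesis using cj assms(3) by simp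
qed

lemma bl_span:
  assumes "basis_list L bs" "x \<in> L"
  obtains c where "x = (\<Sum>j<length bs. c j *\<^sub>R bs ! j)"
proof -
  have d: "distinct bs" and sp: "span (set bs) = L" using assms(1) unfolding basis_list_def by auto
  obtain u where "x = (\<Sum>y\<in>set bs. u y *\<^sub>R y)" using assms(2) sp span_finite[of "set bs"] by auto
  also have "\<dots> = (\<Sum>j<length bs. u (bs ! j) *\<^sub>R bs ! j)" by (rule sum_set_nth[OF d])
  finally have "x = (\<Sum>j<length bs. u (bs ! j) *\<^sub>R bs ! j)" .
  thus ?thesis by (rule that)
qed

lemma bl_sum_in: assumes "basis_list L bs" shows "(\<Sum>j<length bs. c j *\<^sub>R bs ! j) \<in> L"
proof -
  have sp: "span (set bs) = L" using assms unfolding basis_list_def by auto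
  have "c j *\<^sub>R bs ! j \<in> span (set bs)" if "j \<in> {..<length bs}" for j
    using that by (intro span_scale span_base) simp
  hence "(\<Sum>j<length bs. c j *\<^sub>R bs ! j) \<in> span (set bs)" by (rule span_sum)
  thus ?thesis using sp by simp
qed

lemma bl_exists:
  assumes "subspace (L :: 'g::finite sympvec set)"
  shows "\<exists>bs. basis_list L bs"
proof -
  obtain B where B: "B \<subseteq> L" "independent B" "L \<subseteq> span B" "card B = dim L"
    using basis_exists by blast
  have "finite B" using B(2) by (simp add: finiteI_independent)
  then obtain bs where "set bs = B" "distinct bs" using finite_distinct_list by blast
  moreover have "span B = L" using span_subspace[OF B(1) B(3) assms] .
  ultimately show ?thesis using B unfolding basis_list_def by auto
qed



lemma dim_zero_set: "dim {0::'a::euclidean_space} = 0"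
  by (simp add: dim_eq_card_independent[symmetric] dim_span[symmetric, of "{}"])

lemma sums_subset: "subspace U \<Longrightarrow> S \<subseteq> U \<Longrightarrow> T \<subseteq> U \<Longrightarrow> {x + y |x y. x \<in> S \<and> y \<in> T} \<subseteq> U"
  by (auto intro: subspace_add)

lemma sylvester:
  fixes B :: "'g::finite sympvec \<Rightarrow> 'g sympvec \<Rightarrow> real" and U :: "'g sympvec set"
  assumes U: "subspace U"
    and linl: "\<And>y. linear (\<lambda>x. B x y)" and linr: "\<And>x. linear (B x)"
    and sym: "\<And>x y. x \<in> U \<Longrightarrow> y \<in> U \<Longrightarrow> B x y = B y x"
  shows "Max {dim S | S. subspace S \<and> S \<subseteq> U \<and> (\<forall>x\<in>S. x \<noteq> 0 \<longrightarrow> B x x > 0)}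
       + Max {dim S | S. subspace S \<and> S \<subseteq> U \<and> (\<forall>x\<in>S. x \<noteq> 0 \<longrightarrow> B x x < 0)}
       + dim {x\<in>U. \<forall>y\<in>U. B x y = 0} = dim U"
proof -
  define Ps where "Ps = {dim S | S. subspace S \<and> S \<subseteq> U \<and> (\<forall>x\<in>S. x \<noteq> 0 \<longrightarrow> B x x > 0)}"
  define Ns where "Ns = {dim S | S. subspace S \<and> S \<subseteq> U \<and> (\<forall>x\<in>S. x \<noteq> 0 \<longrightarrow> B x x < 0)}"
  define R where "R = {x\<in>U. \<forall>y\<in>U. B x y = 0}"
  have addl: "B (x + y) z = B x z + B y z" for x y z using linear_add[OF linl] by blast
  have addr: "B z (x + y) = B z x + B z y" for x y z using linear_add[OF linr] by blast
  have scl: "B (c *\<^sub>R x) z = c * B x z" for c x z using linear_scale[OF linl] by simp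
  have scr: "B z (c *\<^sub>R x) = c * B z x" for c x z using linear_scale[OF linr] by simp
  have z0l: "B 0 z = 0" for z using linear_0[OF linl] by blast
  have z0r: "B z 0 = 0" for z using linear_0[OF linr] by blast
  have quad: "B (y + z) (y + z) = B y y + 2 * B y z + B z z" if "y \<in> U" "z \<in> U" for y z
    using sym[OF that] by (simp add: addl addr)
  have finPs: "finite Ps" and finNs: "finite Ns"
  proof -
    have "Ps \<subseteq> {..dim U}" "Ns \<subseteq> {..dim U}" unfolding Ps_def Ns_def by (auto intro: dim_subset)
    thus "finite Ps" "finite Ns" by (auto intro: finite_subset)
  qed
  have "0 \<in> Ps" unfolding Ps_def by (rule CollectI, rule exI[of _ "{0}"]) (auto simp: dim_zero_set U subspace_0)
  hence "Max Ps \<in> Ps" using finPs Max_in by blast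
  then obtain P where P: "subspace P" "P \<subseteq> U" "\<And>x. x \<in> P \<Longrightarrow> x \<noteq> 0 \<Longrightarrow> B x x > 0" "dim P = Max Ps"
    unfolding Ps_def by auto
  have "0 \<in> Ns" unfolding Ns_def by (rule CollectI, rule exI[of _ "{0}"]) (auto simp: dim_zero_set U subspace_0)
  hence "Max Ns \<in> Ns" using finNs Max_in by blast
  then obtain Q where Q: "subspace Q" "Q \<subseteq> U" "\<And>x. x \<in> Q \<Longrightarrow> x \<noteq> 0 \<Longrightarrow> B x x < 0" "dim Q = Max Ns"
    unfolding Ns_def by auto
  have sR: "subspace R" unfolding R_def subspace_def using U
    by (auto simp: subspace_def addl scl z0l)
  have RU: "R \<subseteq> U" unfolding R_def by auto
  have le: "Max Ps + Max Ns + dim R \<le> dim U"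
  proof -
    define QR where "QR = {x + y |x y. x \<in> Q \<and> y \<in> R}"
    have "Q \<inter> R = {0}"
    proof -
      have "x = 0" if "x \<in> Q" "x \<in> R" for x
        using that Q(3)[of x] unfolding R_def by fastforce
      thus ?thesis using Q(1) sR by (auto simp: subspace_0)
    qed
    hence dQR: "dim QR = dim Q + dim R" using dim_sums_Int[OF Q(1) sR] unfolding QR_def
      by (simp add: dim_zero_set)
    have sQR: "subspace QR" unfolding QR_def using Q(1) sR by (rule subspace_sums)
    have QRU: "QR \<subseteq> U" unfolding QR_def using sums_subset[OF U Q(2) RU] .
    have "P \<inter> QR = {0}"
    proof -
      have "x = 0" if "x \<in> P" "x \<in> QR" for x
      proof (rule ccontr)
        assume nz: "x \<noteq> 0"
        from that(2) obtain y z where yz: "y \<in> Q" "z \<in> R" "x = y + z" unfolding QR_def by auto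
        have yU: "y \<in> U" using yz Q(2) by auto
        have zU: "z \<in> U" using yz RU by auto
        have "B y z = 0" using sym[OF yU zU] yz(2) yU unfolding R_def by auto
        moreover have "B z z = 0" using yz(2) zU unfolding R_def by auto
        ultimately have "B x x = B y y" using quad[OF yU zU] yz(3) by simp
        moreover have "B y y \<le> 0" using Q(3)[of y] yz(1) by (cases "y = 0") (auto simp: z0l)
        moreover have "B x x > 0" using P(3)[OF that(1) nz] .
        ultimately show False by simp
      qed
      thus ?thesis using P(1) sQR by (auto simp: subspace_0)
    qed
    hence "dim {x + y |x y. x \<in> P \<and> y \<in> QR} = dim P + dim QR"
      using dim_sums_Int[OF P(1) sQR] by (simp add: dim_zero_set)
    moreover have "dim {x + y |x y. x \<in> P \<and> y \<in> QR} \<le> dim U"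
      using sums_subset[OF U P(2) QRU] by (rule dim_subset)
    ultimately show ?thesis using dQR P(4) Q(4) by simp
  qed
  obtain bs where bs: "basis_list P bs" using bl_exists[OF P(1)] by blast
  define n where "n = length bs"
  define phi where "phi x = (\<Sum>i<n. B x (bs ! i) *\<^sub>R bs ! i)" for x
  have lphi: "linear phi"
    unfolding phi_def by (intro linearI) (simp_all add: addl scl sum.distrib scaleR_add_left scale_sum_right)
  have BxP: "B x y = 0" if "phi x = 0" "y \<in> P" for x y
  proof -
    have c0: "B x (bs ! i) = 0" if "i < n" for i
      using bl_indep[OF bs, of "\<lambda>i. B x (bs ! i)"] \<open>phi x = 0\<close> that unfolding phi_def n_def by blast
    obtain c where "y = (\<Sum>j<length bs. c j *\<^sub>R bs ! j)" using bl_span[OF bs \<open>y \<in> P\<close>] by blast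
    hence "B x y = (\<Sum>j<n. c j * B x (bs ! j))" unfolding n_def
      by (simp add: linear_sum[OF linr] scr)
    thus ?thesis using c0 by simp
  qed
  have phiB: "phi x = 0" if "\<forall>y\<in>P. B x y = 0" for x
  proof -
    have "B x (bs ! i) = 0" if "i < n" for i
      using \<open>\<forall>y\<in>P. B x y = 0\<close> bl_set[OF bs] nth_mem[of i bs] that n_def by (metis subsetD)
    thus ?thesis unfolding phi_def by (intro sum.neutral) auto
  qed
  define P' where "P' = {x\<in>U. \<forall>y\<in>P. B x y = 0}"
  have P'eq: "P' = U \<inter> {x. phi x = 0}" unfolding P'_def using BxP phiB by auto
  have sP': "subspace P'" unfolding P'eq
    using U lphi by (intro subspace_inter) (auto simp: subspace_def linear_0 linear_add linear_scale)
  have P'U: "P' \<subseteq> U" unfolding P'_def by auto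
  have "phi ` U \<subseteq> P" unfolding phi_def n_def using bl_sum_in[OF bs] by auto
  hence "dim (phi ` U) \<le> dim P" using dim_subset by blast
  moreover have "dim (phi ` U) + dim P' = dim U" unfolding P'eq using rank_nullity[OF lphi U] .
  ultimately have dP': "dim U \<le> dim P + dim P'" by simp
  have PP'0: "P \<inter> P' = {0}"
  proof -
    have "x = 0" if "x \<in> P" "x \<in> P'" for x using that P(3)[of x] unfolding P'_def by fastforce
    thus ?thesis using P(1) sP' by (auto simp: subspace_0)
  qed
  define PP where "PP = {x + y |x y. x \<in> P \<and> y \<in> P'}"
  have sPP: "subspace PP" unfolding PP_def using P(1) sP' by (rule subspace_sums)
  have PPU: "PP \<subseteq> U" unfolding PP_def using sums_subset[OF U P(2) P'U] .
  have "dim PP = dim P + dim P'" using dim_sums_Int[OF P(1) sP'] PP'0 unfolding PP_def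
    by (simp add: dim_zero_set)
  hence PPeq: "PP = U" using subspace_dim_equal[OF sPP U PPU] dP' by simp
  have nonpos: "B x x \<le> 0" if "x \<in> P'" for x
  proof (rule ccontr)
    assume "\<not> B x x \<le> 0"
    hence pos: "B x x > 0" by simp
    hence "x \<noteq> 0" by (auto simp: z0l)
    have xU: "x \<in> U" using that P'U by auto
    have "x \<notin> P" using that PP'0 \<open>x \<noteq> 0\<close> by auto
    hence xnP: "x \<notin> span P" by (simp only: span_sub[OF P(1)] not_False_eq_True)
    define S where "S = span (insert x P)"
    have "dim S = dim P + 1" unfolding S_def using xnP by (simp add: dim_insert)
    moreover have "subspace S" unfolding S_def by simp
    moreover have "S \<subseteq> U" unfolding S_def using xU P(2) U by (intro span_minimal) auto
    moreover have "\<forall>z\<in>S. z \<noteq> 0 \<longrightarrow> B z z > 0"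
    proof (intro ballI impI)
      fix z assume "z \<in> S" "z \<noteq> 0"
      then obtain k where "z - k *\<^sub>R x \<in> span P" unfolding S_def using span_insert by blast
      hence yP: "z - k *\<^sub>R x \<in> P" by (simp only: span_sub[OF P(1)])
      define y where "y = z - k *\<^sub>R x"
      have yP': "y \<in> P" using yP y_def by simp
      have zy: "z = y + k *\<^sub>R x" unfolding y_def by simp
      have yU: "y \<in> U" using yP' P(2) by auto
      have kxU: "k *\<^sub>R x \<in> U" using xU U by (simp add: subspace_scale)
      have "B y x = 0" using sym[OF yU xU] that yP' unfolding P'_def by auto
      hence "B z z = B y y + k * k * B x x" using quad[OF yU kxU] zy by (simp add: scl scr)
      moreover have "B y y \<ge> 0" using P(3)[OF yP'] z0l[of 0] by (cases "y = 0") auto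
      moreover have "y \<noteq> 0 \<or> k \<noteq> 0" using \<open>z \<noteq> 0\<close> zy by auto
      moreover have "y \<noteq> 0 \<Longrightarrow> B y y > 0" using P(3)[OF yP'] by auto
      moreover have "k \<noteq> 0 \<Longrightarrow> k * k * B x x > 0"
      proof -
        assume "k \<noteq> 0" hence "k * k > 0" by (simp add: zero_less_mult_iff linorder_neq_iff disj_commute)
        thus ?thesis using pos by (simp add: mult_pos_pos)
      qed
      moreover have "k * k * B x x \<ge> 0" using pos by (simp add: mult_nonneg_nonneg)
      ultimately show "B z z > 0" by fastforce
    qed
    ultimately have "dim P + 1 \<in> Ps" unfolding Ps_def
      by (intro CollectI exI[where x=S]) simp
    hence "dim P + 1 \<le> Max Ps" using finPs by simp
    thus False using P(4) by simp
  qed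
  have cs: "B x y = 0" if "x \<in> P'" "B x x = 0" "y \<in> P'" for x y
  proof (rule ccontr)
    assume c: "B x y \<noteq> 0"
    define d where "d = B y y"
    have d0: "d \<le> 0" using nonpos[OF that(3)] d_def by simp
    define c where "c = B x y"
    have xU: "x \<in> U" and yU: "y \<in> U" using that P'U by auto
    have "(1 - d) *\<^sub>R x + c *\<^sub>R y \<in> P'" using that sP' by (simp add: subspace_add subspace_scale)
    hence le0: "B ((1 - d) *\<^sub>R x + c *\<^sub>R y) ((1 - d) *\<^sub>R x + c *\<^sub>R y) \<le> 0" by (rule nonpos)
    have u1: "(1 - d) *\<^sub>R x \<in> U" and u2: "c *\<^sub>R y \<in> U" using xU yU U by (simp_all add: subspace_scale)
    have "B ((1 - d) *\<^sub>R x + c *\<^sub>R y) ((1 - d) *\<^sub>R x + c *\<^sub>R y) = c * c * (2 - d)"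
    proof -
      have "B ((1 - d) *\<^sub>R x) ((1 - d) *\<^sub>R x) = 0" using that(2) by (simp add: scl scr)
      moreover have "B ((1 - d) *\<^sub>R x) (c *\<^sub>R y) = (1 - d) * c * c" using c_def by (simp add: scl scr)
      moreover have "B (c *\<^sub>R y) (c *\<^sub>R y) = c * c * d" using d_def by (simp add: scl scr)
      ultimately show ?thesis using quad[OF u1 u2] by (simp add: algebra_simps)
    qed
    moreover have "c * c * (2 - d) > 0"
    proof -
      have "c \<noteq> 0" using c c_def by simp
      hence "c * c > 0" by (cases "c > 0") (auto simp: mult_pos_pos mult_neg_neg)
      thus ?thesis using d0 by (simp add: mult_pos_pos)
    qed
    ultimately show False using le0 by simp
  qed
  have inR: "x \<in> R" if "x \<in> P'" "B x x = 0" for x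
  proof -
    have "B x u = 0" if "u \<in> U" for u
    proof -
      from that PPeq obtain y z where "y \<in> P" "z \<in> P'" "u = y + z" unfolding PP_def by auto
      thus ?thesis using cs[OF \<open>x \<in> P'\<close> \<open>B x x = 0\<close>] \<open>x \<in> P'\<close> unfolding P'_def by (auto simp: addr)
    qed
    thus ?thesis using that P'U unfolding R_def by auto
  qed
  define R' where "R' = R \<inter> P'"
  have sR': "subspace R'" unfolding R'_def using sR sP' by (rule subspace_inter)
  define C where "C = {y \<in> P'. \<forall>x \<in> R'. Linear_Algebra.orthogonal x y}"
  have dC: "dim C + dim R' = dim P'" unfolding C_def
    using dim_subspace_orthogonal_to_vectors[OF sR' sP'] R'_def by auto
  have "C = P' \<inter> orthogonal_comp R'" unfolding C_def orthogonal_comp_def by auto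
  hence sC: "subspace C" using subspace_inter[OF sP' subspace_orthogonal_comp] by simp
  have "dim C \<in> Ns" unfolding Ns_def
  proof (rule CollectI, rule exI[of _ C], intro conjI ballI impI)
    show "subspace C" by fact
    show "C \<subseteq> U" unfolding C_def using P'U by auto
    fix x assume x: "x \<in> C" "x \<noteq> 0"
    have xP': "x \<in> P'" using x C_def by auto
    show "B x x < 0"
    proof (rule ccontr)
      assume "\<not> B x x < 0"
      hence "B x x = 0" using nonpos[OF xP'] by simp
      hence "x \<in> R'" using inR[OF xP'] xP' unfolding R'_def by auto
      hence "Linear_Algebra.orthogonal x x" using x(1) unfolding C_def by auto
      thus False using x(2) by (simp add: Linear_Algebra.orthogonal_self)
    qed
  qed (rule refl)
  hence "dim C \<le> Max Ns" using finNs by simp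
  moreover have "dim R' \<le> dim R" unfolding R'_def by (simp add: dim_subset)
  ultimately have "dim U \<le> Max Ps + Max Ns + dim R" using dP' dC P(4) by linarith
  with le show ?thesis unfolding Ps_def Ns_def R_def by linarith
qed



lemma sum_split_nat: fixes a b :: nat shows "(\<Sum>i<a+b. g i) = (\<Sum>i<a. g i) + (\<Sum>j<b. g (a + j))"
  by (induction b) (simp_all add: add.assoc)

lemma sum_nth_append:
  "(\<Sum>i<length (xs @ ys). w i *\<^sub>R (xs @ ys) ! i) =
   (\<Sum>i<length xs. w i *\<^sub>R xs ! i) + (\<Sum>j<length ys. w (length xs + j) *\<^sub>R ys ! j)"
proof -
  have "(\<Sum>i<length (xs @ ys). w i *\<^sub>R (xs @ ys) ! i) = (\<Sum>i<length xs + length ys. w i *\<^sub>R (xs @ ys) ! i)" by simp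
  also have "\<dots> = (\<Sum>i<length xs. w i *\<^sub>R (xs @ ys) ! i) + (\<Sum>j<length ys. w (length xs + j) *\<^sub>R (xs @ ys) ! (length xs + j))"
    by (rule sum_split_nat)
  also have "(\<Sum>i<length xs. w i *\<^sub>R (xs @ ys) ! i) = (\<Sum>i<length xs. w i *\<^sub>R xs ! i)"
    by (intro sum.cong) (auto simp: nth_append)
  finally show ?thesis by (simp add: nth_append)
qed

lemma lambda0_sub: "subspace (lambda0 :: 'g::finite sympvec set)"
  unfolding lambda0_def subspace_def by auto

lemma lambda0_range: "(lambda0 :: 'g::finite sympvec set) = range (\<lambda>v. (v, 0))"
  unfolding lambda0_def by (auto intro: prod_eqI)

lemma dim_lambda0: "dim (lambda0 :: 'g::finite sympvec set) = CARD('g)"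
proof -
  have l: "linear (\<lambda>v::real^'g. (v, 0::real^'g))" by (intro linearI) auto
  have i: "inj_on (\<lambda>v::real^'g. (v, 0::real^'g)) (span UNIV)" by (auto simp: inj_on_def)
  have "dim (range (\<lambda>v::real^'g. (v, 0::real^'g))) = dim (UNIV :: (real^'g) set)"
    using dim_image_eq[OF l i] .
  thus ?thesis unfolding lambda0_range by simp
qed

lemma lambda0_iso: "(lambda0 :: 'g::finite sympvec set) \<subseteq> operp lambda0"
  unfolding lambda0_def operp_def omega_def by auto

lemma operp_lambda0: "operp (lambda0 :: 'g::finite sympvec set) = lambda0"
proof -
  have "dim (operp (lambda0 :: 'g sympvec set)) + dim (lambda0 :: 'g sympvec set) = 2 * CARD('g)"
    by (rule dim_operp[OF lambda0_sub])
  hence "dim (operp (lambda0 :: 'g sympvec set)) = CARD('g)" using dim_lambda0[where 'g='g] by simp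
  hence "dim (operp (lambda0 :: 'g sympvec set)) \<le> dim (lambda0 :: 'g sympvec set)"
    using dim_lambda0[where 'g='g] by simp
  hence "lambda0 = operp (lambda0 :: 'g sympvec set)"
    by (rule subspace_dim_equal[OF lambda0_sub subspace_operp lambda0_iso])
  thus ?thesis by simp
qed

lemma operp_sums:
  assumes "subspace A" "subspace B"
  shows "operp {x + y |x y. x \<in> A \<and> y \<in> B} = operp A \<inter> operp B"
proof
  have "0 \<in> A" "0 \<in> B" using assms by (auto simp: subspace_0)
  show "operp {x + y |x y. x \<in> A \<and> y \<in> B} \<subseteq> operp A \<inter> operp B"
  proof
    fix z assume z: "z \<in> operp {x + y |x y. x \<in> A \<and> y \<in> B}"
    have "omega z x = 0" if "x \<in> A" for x
    proof -
      have "x \<in> {x + y |x y. x \<in> A \<and> y \<in> B}" using that \<open>0 \<in> B\<close>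
        by (intro CollectI exI[of _ x] exI[of _ 0]) simp
      thus ?thesis using z unfolding operp_def by blast
    qed
    moreover have "omega z y = 0" if "y \<in> B" for y
    proof -
      have "y \<in> {x + y |x y. x \<in> A \<and> y \<in> B}" using that \<open>0 \<in> A\<close>
        by (intro CollectI exI[of _ 0] exI[of _ y]) simp
      thus ?thesis using z unfolding operp_def by blast
    qed
    ultimately show "z \<in> operp A \<inter> operp B" unfolding operp_def by auto
  qed
  show "operp A \<inter> operp B \<subseteq> operp {x + y |x y. x \<in> A \<and> y \<in> B}"
  proof
    fix z assume z: "z \<in> operp A \<inter> operp B"
    have "omega z w = 0" if "w \<in> {x + y |x y. x \<in> A \<and> y \<in> B}" for w
    proof -
      from that obtain x y where "w = x + y" "x \<in> A" "y \<in> B" by blast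
      thus ?thesis using z unfolding operp_def by (simp add: omega_add_right)
    qed
    thus "z \<in> operp {x + y |x y. x \<in> A \<and> y \<in> B}" unfolding operp_def by blast
  qed
qed

definition iindep :: "'g::finite sympvec list \<Rightarrow> bool" where
  "iindep xs \<longleftrightarrow> (\<forall>v. (\<Sum>j<length xs. v j *\<^sub>R xs ! j) = 0 \<longrightarrow> (\<forall>j<length xs. v j = 0))"

lemma iindepD: "iindep xs \<Longrightarrow> (\<Sum>j<length xs. v j *\<^sub>R xs ! j) = 0 \<Longrightarrow> j < length xs \<Longrightarrow> v j = 0"
  unfolding iindep_def by blast

lemma bl_iindep: "basis_list L xs \<Longrightarrow> iindep xs"
  unfolding iindep_def using bl_indep by blast

lemma iindep_bl:
  assumes "iindep xs" "span (set xs) = L"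
  shows "basis_list L xs"
proof -
  have d: "distinct xs"
  proof (rule ccontr)
    assume "\<not> distinct xs"
    then obtain i j where ij: "i < length xs" "j < length xs" "i \<noteq> j" "xs ! i = xs ! j"
      by (auto simp: distinct_conv_nth)
    define v where "v k = (if k = i then 1 else if k = j then -1 else (0::real))" for k
    have "(\<Sum>k<length xs. v k *\<^sub>R xs ! k) = (\<Sum>k\<in>{i,j}. v k *\<^sub>R xs ! k)"
      by (rule sum.mono_neutral_right) (use ij in \<open>auto simp: v_def\<close>)
    also have "\<dots> = 0" using ij by (simp add: v_def)
    finally have "v i = 0" using assms(1) ij unfolding iindep_def by blast
    thus False by (simp add: v_def)
  qed
  have "independent (set xs)" unfolding independent_explicit
  proof (intro conjI allI impI ballI)
    show "finite (set xs)" by simp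
    fix c x assume c: "(\<Sum>v\<in>set xs. c v *\<^sub>R v) = 0" and x: "x \<in> set xs"
    have "(\<Sum>k<length xs. c (xs ! k) *\<^sub>R xs ! k) = 0" using c sum_set_nth[OF d, of "\<lambda>v. c v *\<^sub>R v"] by simp
    hence "\<forall>k<length xs. c (xs ! k) = 0" using iindepD[OF assms(1), of "\<lambda>k. c (xs ! k)"] by blast
    thus "c x = 0" using x by (auto simp: in_set_conv_nth)
  qed
  thus ?thesis using d assms(2) unfolding basis_list_def by auto
qed

lemma iindep_map:
  assumes "iindep xs" "linear f" "inj f"
  shows "iindep (map f xs)"
proof -
  have "\<forall>j<length xs. v j = 0" if h: "(\<Sum>j<length xs. v j *\<^sub>R f (xs ! j)) = 0" for v
  proof -
  from h have "f (\<Sum>j<length xs. v j *\<^sub>R xs ! j) = f 0"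
    using assms(2) by (simp add: linear_sum linear_scale linear_0)
  hence "(\<Sum>j<length xs. v j *\<^sub>R xs ! j) = 0" using assms(3) by (simp add: inj_eq)
  thus ?thesis using assms(1) unfolding iindep_def by simp
  qed
  thus ?thesis unfolding iindep_def by simp
qed

lemma bl_flip:
  assumes "basis_list L xs" "k < length xs"
  shows "basis_list L (xs[k := - xs ! k])"
proof -
  let ?ys = "xs[k := - xs ! k]"
  have sp: "span (set xs) = L" using assms(1) unfolding basis_list_def by auto
  have "iindep ?ys" unfolding iindep_def
  proof (rule allI, rule impI)
    fix v assume h: "(\<Sum>j<length ?ys. v j *\<^sub>R ?ys ! j) = 0"
    define v' where "v' j = (if j = k then - v j else v j)" for j
    have "(\<Sum>j<length xs. v' j *\<^sub>R xs ! j) = (\<Sum>j<length ?ys. v j *\<^sub>R ?ys ! j)"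
      by (intro sum.cong) (auto simp: v'_def nth_list_update)
    hence "\<forall>j<length xs. v' j = 0" using h bl_iindep[OF assms(1)] unfolding iindep_def by simp
    thus "\<forall>j<length ?ys. v j = 0" by (auto simp: v'_def split: if_splits)
  qed
  moreover have "span (set ?ys) = L"
  proof -
    have "set ?ys \<subseteq> span (set xs)"
    proof
      fix y assume "y \<in> set ?ys"
      then obtain j where j: "j < length xs" "y = ?ys ! j" by (auto simp: in_set_conv_nth)
      show "y \<in> span (set xs)"
      proof (cases "j = k")
        case True
        have "xs ! k \<in> span (set xs)" using assms(2) by (intro span_base) simp
        hence "- xs ! k \<in> span (set xs)" by (rule span_neg)
        thus ?thesis using j True assms(2) by simp
      next
        case False
        thus ?thesis using j by (simp add: span_base)
      qed
    qed
    moreover have "set xs \<subseteq> span (set ?ys)"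
    proof
      fix y assume "y \<in> set xs"
      then obtain j where j: "j < length xs" "y = xs ! j" by (auto simp: in_set_conv_nth)
      show "y \<in> span (set ?ys)"
      proof (cases "j = k")
        case True
        have "- xs ! k \<in> set ?ys" using assms(2) by (simp add: set_update_memI)
        hence "- (- xs ! k) \<in> span (set ?ys)" by (intro span_neg span_base)
        thus ?thesis using True j by simp
      next
        case False
        hence "?ys ! j = y" using j by simp
        moreover have "?ys ! j \<in> set ?ys" using j by simp
        ultimately show ?thesis by (metis span_base)
      qed
    qed
    ultimately show ?thesis using sp span_eq by blast
  qed
  ultimately show ?thesis by (rule iindep_bl)
qed



lemma ldet_jnf: "ldet m M = Determinant.det (mat m m (\<lambda>(i,j). M i j))"
  unfolding ldet_def Determinant.det_def by (simp add: atLeast0LessThan)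

lemma ldet_nz:
  assumes "\<And>v. (\<forall>i<m. (\<Sum>j<m. M i j * v j) = 0) \<Longrightarrow> (\<forall>j<m. v j = 0)"
  shows "ldet m M \<noteq> 0"
proof
  assume "ldet m M = 0"
  then obtain v where v: "v \<in> carrier_vec m" "v \<noteq> 0\<^sub>v m" "mat m m (\<lambda>(i,j). M i j) *\<^sub>v v = 0\<^sub>v m"
    unfolding ldet_jnf using det_0_iff_vec_prod_zero_field[of "mat m m (\<lambda>(i,j). M i j)" m] by auto
  have "\<forall>i<m. (\<Sum>j<m. M i j * (Matrix.vec_index v j)) = 0"
  proof (intro allI impI)
    fix i assume i: "i < m"
    have "Matrix.vec_index (mat m m (\<lambda>(i,j). M i j) *\<^sub>v v) i = 0" using v(3) i by simp
    thus "(\<Sum>j<m. M i j * (Matrix.vec_index v j)) = 0" using i v(1)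
      by (simp add: mult_mat_vec_def scalar_prod_def atLeast0LessThan)
  qed
  from assms[OF this] have "\<forall>j<m. Matrix.vec_index v j = 0" .
  hence "v = 0\<^sub>v m" using v(1) by (intro eq_vecI) auto
  with v(2) show False by simp
qed

lemma ldet_flip:
  assumes "k < m"
  shows "ldet m (\<lambda>i j. if i = k then - M i j else M i j) = - ldet m M"
proof -
  have "(\<Prod>i<m. (if i = k then - M i (p i) else M i (p i))) = - (\<Prod>i<m. M i (p i))" for p
  proof -
    have k: "k \<in> {..<m}" using assms by simp
    have "(\<Prod>i<m. (if i = k then - M i (p i) else M i (p i)))
        = (if k = k then - M k (p k) else M k (p k)) * (\<Prod>i\<in>{..<m} - {k}. (if i = k then - M i (p i) else M i (p i)))"
      by (rule prod.remove[OF finite_lessThan k])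
    also have "(\<Prod>i\<in>{..<m} - {k}. (if i = k then - M i (p i) else M i (p i))) = (\<Prod>i\<in>{..<m} - {k}. M i (p i))"
      by (intro prod.cong) auto
    also have "(\<Prod>i<m. M i (p i)) = M k (p k) * (\<Prod>i\<in>{..<m} - {k}. M i (p i))"
      by (rule prod.remove[OF finite_lessThan k])
    ultimately show ?thesis by simp
  qed
  thus ?thesis unfolding ldet_def by (simp add: sum_negf)
qed

lemma orient_fix:
  assumes bl: "basis_list L (c @ a')" and ne: "a' \<noteq> []"
    and len: "length ys = length (c @ a')" and ys: "set ys \<subseteq> L" and yi: "iindep ys"
  shows "\<exists>a''. basis_list L (c @ a'') \<and> same_orient (c @ a'') ys \<and> length a'' = length a'"
proof -
  define xs where "xs = c @ a'"
  define n where "n = length xs"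
  have bx: "basis_list L xs" using bl xs_def by simp
  have lys: "length ys = n" using len xs_def n_def by simp
  have ex: "\<exists>u. ys ! j = (\<Sum>i<n. u i *\<^sub>R xs ! i)" if "j < n" for j
  proof -
    have "ys ! j \<in> L" using ys that lys nth_mem[of j ys] by auto
    then obtain u where "ys ! j = (\<Sum>i<length xs. u i *\<^sub>R xs ! i)" using bl_span[OF bx] by blast
    thus ?thesis unfolding n_def by blast
  qed
  define M where "M i j = (SOME u. ys ! j = (\<Sum>i<n. u i *\<^sub>R xs ! i)) i" for i j
  have Mp: "ys ! j = (\<Sum>i<n. M i j *\<^sub>R xs ! i)" if "j < n" for j
    unfolding M_def using someI_ex[OF ex[OF that]] .
  have nz: "ldet n M \<noteq> 0"
  proof (rule ldet_nz)
    fix v assume h: "\<forall>i<n. (\<Sum>j<n. M i j * v j) = 0"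
    have "(\<Sum>j<n. v j *\<^sub>R ys ! j) = (\<Sum>j<n. v j *\<^sub>R (\<Sum>i<n. M i j *\<^sub>R xs ! i))"
      by (intro sum.cong) (simp_all add: Mp)
    also have "\<dots> = (\<Sum>j<n. \<Sum>i<n. (v j * M i j) *\<^sub>R xs ! i)"
      by (simp add: scaleR_sum_right)
    also have "\<dots> = (\<Sum>i<n. \<Sum>j<n. (v j * M i j) *\<^sub>R xs ! i)" by (rule sum.swap)
    also have "\<dots> = (\<Sum>i<n. (\<Sum>j<n. M i j * v j) *\<^sub>R xs ! i)"
      by (simp add: scaleR_sum_left mult.commute)
    also have "\<dots> = 0" using h by simp
    finally show "\<forall>j<n. v j = 0" using iindepD[OF yi] lys by auto
  qed
  show ?thesis
  proof (cases "ldet n M > 0")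
    case True
    hence "same_orient xs ys" unfolding same_orient_def using lys Mp n_def by auto
    thus ?thesis using bl xs_def by blast
  next
    case False
    hence neg: "ldet n M < 0" using nz by simp
    define k where "k = n - 1"
    have kn: "k < n" using ne unfolding k_def n_def xs_def by simp
    define m where "m = length a' - 1"
    define a'' where "a'' = a'[m := - a' ! m]"
    have km: "k = length c + m" unfolding k_def n_def xs_def m_def using ne by (cases a') auto
    have xs': "c @ a'' = xs[k := - xs ! k]"
      unfolding a''_def xs_def km by (simp add: list_update_append nth_append)
    have bx': "basis_list L (c @ a'')" unfolding xs' using bl_flip[OF bx] kn n_def by simp
    define M' where "M' i j = (if i = k then - M i j else M i j)" for i j
    have "ldet n M' = - ldet n M" unfolding M'_def using ldet_flip[OF kn] .
    hence pos: "ldet n M' > 0" using neg by simp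
    have rep: "ys ! j = (\<Sum>i<n. M' i j *\<^sub>R (c @ a'') ! i)" if "j < n" for j
    proof -
      have "(\<Sum>i<n. M' i j *\<^sub>R (c @ a'') ! i) = (\<Sum>i<n. M i j *\<^sub>R xs ! i)"
        unfolding xs' M'_def by (intro sum.cong) (auto simp: n_def)
      thus ?thesis using Mp[OF that] by simp
    qed
    have la: "length (c @ a'') = n" unfolding xs' n_def by simp
    have "same_orient (c @ a'') ys" unfolding same_orient_def using la lys rep pos by auto
    moreover have "length a'' = length a'" unfolding a''_def by simp
    ultimately show ?thesis using bx' by blast
  qed
qed



lemma bl_extend:
  assumes c: "basis_list K c" and KL: "K \<subseteq> L" and L: "subspace L"
  obtains a' where "basis_list L (c @ a')"
proof -
  have ind: "independent (set c)" and dc: "distinct c" using c unfolding basis_list_def by auto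
  have "set c \<subseteq> L" using bl_set[OF c] KL by auto
  then obtain B where B: "set c \<subseteq> B" "B \<subseteq> L" "independent B" "L \<subseteq> span B"
    using maximal_independent_subset_extend[OF _ ind] by blast
  have "finite (B - set c)" using B(3) by (simp add: finiteI_independent)
  then obtain a' where a': "set a' = B - set c" "distinct a'" using finite_distinct_list by blast
  have "distinct (c @ a')" using a' dc by auto
  moreover have "set (c @ a') = B" using a' B(1) by auto
  moreover have "span B = L" using span_subspace[OF B(2) B(4) L] .
  ultimately have "basis_list L (c @ a')" using B(3) unfolding basis_list_def by simp
  thus ?thesis by (rule that)
qed

lemma lag_dim:
  assumes "operp L = (L :: 'g::finite sympvec set)"
  shows "dim L = CARD('g)" "subspace L"
proof -
  show sL: "subspace L" using subspace_operp[of L] assms by simp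
  have "dim (operp L) + dim L = 2 * CARD('g)" by (rule dim_operp[OF sL])
  thus "dim L = CARD('g)" using assms by simp
qed

lemma eps_pm:
  fixes L1 L2 :: "'g::finite sympvec set"
  assumes L1: "operp L1 = L1" and L2: "operp L2 = L2"
    and a: "length a = dim L1" "set a \<subseteq> L1" "iindep a"
    and b: "length b = dim L2" "set b \<subseteq> L2" "iindep b"
  shows "eps L1 a L2 b = 1 \<or> eps L1 a L2 b = -1"
proof (cases "L1 = L2")
  case True thus ?thesis unfolding eps_def by simp
next
  case False
  have d1: "dim L1 = CARD('g)" and s1: "subspace L1" using lag_dim[OF L1] by auto
  have d2: "dim L2 = CARD('g)" and s2: "subspace L2" using lag_dim[OF L2] by auto
  define K where "K = L1 \<inter> L2"
  have sK: "subspace K" unfolding K_def using s1 s2 by (rule subspace_inter)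
  have dK1: "dim K < dim L1"
  proof -
    have "K \<noteq> L1"
    proof
      assume "K = L1"
      hence "L1 \<subseteq> L2" unfolding K_def by auto
      hence "L1 = L2" using subspace_dim_equal[OF s1 s2] d1 d2 by simp
      thus False using False by simp
    qed
    hence "K \<subset> L1" unfolding K_def by auto
    hence "span K \<subset> span L1" by (simp only: span_sub[OF sK] span_sub[OF s1])
    thus ?thesis by (rule dim_psubset)
  qed
  have dK2: "dim K < dim L2"
  proof -
    have "K \<noteq> L2"
    proof
      assume "K = L2"
      hence "L2 \<subseteq> L1" unfolding K_def by auto
      hence "L2 = L1" using subspace_dim_equal[OF s2 s1] d1 d2 by simp
      thus False using False by simp
    qed
    hence "K \<subset> L2" unfolding K_def by auto
    hence "span K \<subset> span L2" by (simp only: span_sub[OF sK] span_sub[OF s2])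
    thus ?thesis by (rule dim_psubset)
  qed
  obtain c where c: "basis_list K c" using bl_exists[OF sK] by blast
  obtain a0 where a0: "basis_list L1 (c @ a0)" using bl_extend[OF c _ s1] K_def by blast
  obtain b0 where b0: "basis_list L2 (c @ b0)" using bl_extend[OF c _ s2] K_def by blast
  have "a0 \<noteq> []" using bl_length[OF a0] bl_length[OF c] dK1 by auto
  then obtain a1 where a1: "basis_list L1 (c @ a1)" "same_orient (c @ a1) a"
    using orient_fix[OF a0 _ _ a(2) a(3)] a(1) bl_length[OF a0] by auto
  have "b0 \<noteq> []" using bl_length[OF b0] bl_length[OF c] dK2 by auto
  then obtain b1 where b1: "basis_list L2 (c @ b1)" "same_orient (c @ b1) b"
    using orient_fix[OF b0 _ _ b(2) b(3)] b(1) bl_length[OF b0] by auto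
  define P where "P = (\<lambda>(c, a', b'). basis_list (L1 \<inter> L2) c
                   \<and> basis_list L1 (c @ a') \<and> same_orient (c @ a') a
                   \<and> basis_list L2 (c @ b') \<and> same_orient (c @ b') b)"
  have "P (c, a1, b1)" unfolding P_def using c a1 b1 K_def by simp
  hence PS: "P (SOME t. P t)" by (rule someI)
  obtain c' a' b' where t: "(SOME t. P t) = (c', a', b')" by (cases "SOME t. P t") auto
  have c': "basis_list K c'" and a': "basis_list L1 (c' @ a')" and b': "basis_list L2 (c' @ b')"
  proof -
    have "P (c', a', b')" using PS by (simp only: t)
    thus "basis_list K c'" "basis_list L1 (c' @ a')" "basis_list L2 (c' @ b')" unfolding P_def K_def by auto
  qed
  have epsv: "eps L1 a L2 b = sgn (ldet (length a') (\<lambda>i j. omega (a' ! i) (b' ! j)))"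
    unfolding eps_def using False t unfolding P_def by simp
  define m where "m = length a'"
  have lb': "length b' = m" using bl_length[OF a'] bl_length[OF b'] d1 d2 m_def by simp
  have "ldet m (\<lambda>i j. omega (a' ! i) (b' ! j)) \<noteq> 0"
  proof (rule ldet_nz)
    fix v assume h: "\<forall>i<m. (\<Sum>j<m. omega (a' ! i) (b' ! j) * v j) = 0"
    define y where "y = (\<Sum>j<m. v j *\<^sub>R b' ! j)"
    have b'L2: "b' ! j \<in> L2" if "j < m" for j
      using bl_set[OF b'] that lb' by (auto simp: nth_append)
    have yL2: "y \<in> L2" unfolding y_def using b'L2 s2 by (intro subspace_sum subspace_scale) auto
    have oa: "omega (a' ! i) y = 0" if "i < m" for i
      using h that unfolding y_def by (simp add: omega_sum_right omega_scale_right mult.commute)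
    have "omega x y = 0" if xL1: "x \<in> L1" for x
    proof -
      obtain e where e: "x = (\<Sum>i<length (c' @ a'). e i *\<^sub>R (c' @ a') ! i)" using bl_span[OF a' xL1] by blast
      have "x = (\<Sum>i<length c'. e i *\<^sub>R c' ! i) + (\<Sum>j<length a'. e (length c' + j) *\<^sub>R a' ! j)"
        using e sum_nth_append by simp
      moreover have "omega (c' ! i) y = 0" if "i < length c'" for i
      proof -
        have "c' ! i \<in> K" using bl_set[OF c'] that by auto
        hence "c' ! i \<in> operp L2" using L2 K_def by auto
        thus ?thesis using yL2 unfolding operp_def by auto
      qed
      ultimately show ?thesis using oa m_def
        by (simp add: omega_add_left omega_sum_left omega_scale_left)
    qed
    hence "y \<in> operp L1" unfolding operp_def by (auto simp: omega_anti[of y])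
    hence "y \<in> K" using L1 yL2 K_def by auto
    then obtain e where e: "y = (\<Sum>i<length c'. e i *\<^sub>R c' ! i)" using bl_span[OF c'] by blast
    define w where "w i = (if i < length c' then e i else - v (i - length c'))" for i
    have "(\<Sum>i<length (c' @ b'). w i *\<^sub>R (c' @ b') ! i)
        = (\<Sum>i<length c'. w i *\<^sub>R c' ! i) + (\<Sum>j<length b'. w (length c' + j) *\<^sub>R b' ! j)"
      by (rule sum_nth_append)
    also have "(\<Sum>i<length c'. w i *\<^sub>R c' ! i) = y" unfolding e w_def by simp
    also have "(\<Sum>j<length b'. w (length c' + j) *\<^sub>R b' ! j) = - y"
      unfolding y_def w_def lb' by (simp add: sum_negf)
    finally have "(\<Sum>i<length (c' @ b'). w i *\<^sub>R (c' @ b') ! i) = 0" by simp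
    hence "w (length c' + j) = 0" if "j < m" for j using bl_indep[OF b'] that lb' by simp
    thus "\<forall>j<m. v j = 0" unfolding w_def by simp
  qed
  thus ?thesis unfolding epsv m_def by (auto simp: sgn_real_def)
qed



lemma minus_one_powi:
  fixes m :: nat and t :: int
  shows "(-1::complex) powi (int m + 2 * t) = (-1) ^ m"
proof -
  have "(-1::complex) powi (int m + 2 * t) = (-1) powi (int m) * (-1) powi (2 * t)"
    by (rule power_int_add) simp
  also have "(-1::complex) powi (2 * t) = ((-1) powi 2) powi t" by (rule power_int_mult)
  also have "((-1::complex) powi 2) = 1" by simp
  finally show ?thesis by simp
qed

context
  fixes f :: "'g::finite sympvec \<Rightarrow> 'g sympvec"
  assumes sf: "symplectic f"
begin

lemma lin_f: "linear f" using sf unfolding symplectic_def by simp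
lemma om_f: "omega (f x) (f y) = omega x y" using sf unfolding symplectic_def by blast

lemma inj_f: "inj f"
proof (rule injI)
  fix x y assume "f x = f y"
  hence "f (x - y) = 0" using lin_f by (simp add: linear_diff)
  hence "omega (x - y) z = 0" for z using om_f[of "x - y" z] by simp
  hence "x - y = 0" by (rule omega_nondeg)
  thus "x = y" by simp
qed

lemma lin_d: "linear (\<lambda>x. f x - x)"
  using lin_f by (intro linearI) (simp_all add: linear_add linear_scale algebra_simps)

lemma subN: "subspace {x. f x - x = 0}"
  using linear_subspace_kernel[OF lin_d] .

lemma subW: "subspace (imgW f)"
  unfolding imgW_def using linear_subspace_image[OF lin_d subspace_UNIV] .

lemma dimWN: "dim (imgW f) + dim {x. f x - x = 0} = 2 * CARD('g)"
  using rank_nullity[OF lin_d subspace_UNIV] unfolding imgW_def by simp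

lemma W_sub: "imgW f \<subseteq> operp {x. f x - x = 0}"
proof
  fix w assume "w \<in> imgW f"
  then obtain x where x: "w = f x - x" unfolding imgW_def by auto
  have "omega w n = 0" if "f n - n = 0" for n
  proof -
    have "f n = n" using that by simp
    hence "omega (f x) n = omega x n" using om_f[of x n] by simp
    thus ?thesis using x by (simp add: omega_diff_left)
  qed
  thus "w \<in> operp {x. f x - x = 0}" unfolding operp_def by auto
qed

lemma W_eq: "imgW f = operp {x. f x - x = 0}"
proof -
  have "dim (operp {x. f x - x = 0}) + dim {x. f x - x = 0} = 2 * CARD('g)" by (rule dim_operp[OF subN])
  hence "dim (operp {x. f x - x = 0}) \<le> dim (imgW f)" using dimWN by simp
  thus ?thesis by (rule subspace_dim_equal[OF subW subspace_operp W_sub])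
qed

lemma U_eq: "lambda0 \<inter> imgW f = operp {x + y |x y. x \<in> lambda0 \<and> y \<in> {x. f x - x = 0}}"
  unfolding operp_sums[OF lambda0_sub subN] operp_lambda0 W_eq ..

lemma dimU: "dim (lambda0 \<inter> imgW f) + dim {x. f x - x = 0} = CARD('g) + dim (lambda0 \<inter> {x. f x - x = 0})"
proof -
  define S where "S = {x + y |x y. x \<in> (lambda0 :: 'g sympvec set) \<and> y \<in> {x. f x - x = 0}}"
  have sS: "subspace S" unfolding S_def by (rule subspace_sums[OF lambda0_sub subN])
  have "dim (operp S) + dim S = 2 * CARD('g)" by (rule dim_operp[OF sS])
  moreover have "dim S + dim (lambda0 \<inter> {x. f x - x = 0}) = dim (lambda0 :: 'g sympvec set) + dim {x. f x - x = 0}"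
    unfolding S_def by (rule dim_sums_Int[OF lambda0_sub subN])
  moreover have "dim (lambda0 :: 'g sympvec set) = CARD('g)" by (rule dim_lambda0)
  moreover have "lambda0 \<inter> imgW f = operp S" unfolding S_def by (rule U_eq)
  ultimately show ?thesis by simp
qed

lemma dimR: "dim (lambda0 \<inter> (\<lambda>x. f x - x) ` lambda0) + dim (lambda0 \<inter> {x. f x - x = 0})
    = dim (lambda0 \<inter> f ` lambda0)"
proof -
  define S where "S = lambda0 \<inter> {x. f x \<in> lambda0}"
  have L: "subspace (lambda0 :: 'g sympvec set)" by (rule lambda0_sub)
  have sS: "subspace S" unfolding S_def using L lin_f
    by (auto simp: subspace_def linear_0 linear_add linear_scale)
  have i1: "(\<lambda>x. f x - x) ` S = lambda0 \<inter> (\<lambda>x. f x - x) ` lambda0"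
  proof
    show "(\<lambda>x. f x - x) ` S \<subseteq> lambda0 \<inter> (\<lambda>x. f x - x) ` lambda0"
      unfolding S_def using L by (auto intro: subspace_diff)
    show "lambda0 \<inter> (\<lambda>x. f x - x) ` lambda0 \<subseteq> (\<lambda>x. f x - x) ` S"
    proof
      fix y assume "y \<in> lambda0 \<inter> (\<lambda>x. f x - x) ` lambda0"
      then obtain x where x: "x \<in> lambda0" "y = f x - x" "y \<in> lambda0" by auto
      have "(f x - x) + x \<in> lambda0" using x L by (intro subspace_add) auto
      hence "f x \<in> lambda0" by simp
      hence "x \<in> S" using x unfolding S_def by simp
      thus "y \<in> (\<lambda>x. f x - x) ` S" using x by blast
    qed
  qed
  have i2: "S \<inter> {x. f x - x = 0} = lambda0 \<inter> {x. f x - x = 0}" unfolding S_def by auto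
  have i3: "f ` S = lambda0 \<inter> f ` lambda0" unfolding S_def by auto
  have "dim (f ` S) = dim S"
    using dim_image_eq[OF lin_f] inj_f by (metis inj_on_subset subset_UNIV)
  moreover have "dim ((\<lambda>x. f x - x) ` S) + dim (S \<inter> {x. f x - x = 0}) = dim S"
    by (rule rank_nullity[OF lin_d sS])
  ultimately show ?thesis unfolding i1 i2 i3 by simp
qed

lemma fL_iso: "f ` lambda0 \<subseteq> operp (f ` lambda0)"
proof
  fix z assume "z \<in> f ` lambda0"
  then obtain x where x: "x \<in> lambda0" "z = f x" by blast
  have "omega z w = 0" if wf: "w \<in> f ` lambda0" for w
  proof -
    obtain y where y: "y \<in> lambda0" "w = f y" using wf by blast
    have "omega x y = 0" using x(1) y(1) lambda0_iso unfolding operp_def by auto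
    thus ?thesis using x y om_f by simp
  qed
  thus "z \<in> operp (f ` lambda0)" unfolding operp_def by auto
qed

lemma dim_fL: "dim (f ` lambda0) = CARD('g)"
proof -
  have "dim (f ` lambda0) = dim (lambda0 :: 'g sympvec set)"
    using dim_image_eq[OF lin_f] inj_f by (metis inj_on_subset subset_UNIV)
  thus ?thesis using dim_lambda0 by simp
qed

lemma fL_lag: "operp (f ` lambda0) = f ` lambda0"
proof -
  have s: "subspace (f ` lambda0)" by (rule linear_subspace_image[OF lin_f lambda0_sub])
  have "dim (operp (f ` lambda0)) + dim (f ` lambda0) = 2 * CARD('g)" by (rule dim_operp[OF s])
  hence "dim (operp (f ` lambda0)) \<le> dim (f ` lambda0)" using dim_fL by simp
  hence "f ` lambda0 = operp (f ` lambda0)" by (rule subspace_dim_equal[OF s subspace_operp fL_iso])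
  thus ?thesis by simp
qed

end



context
  fixes f :: "'g::finite sympvec \<Rightarrow> 'g sympvec" and h :: "'g sympvec \<Rightarrow> 'g sympvec"
  assumes sf: "symplectic f" and lh: "linear h"
    and hinv: "\<And>v. v \<in> imgW f \<Longrightarrow> f (h v) - h v = v"
begin

lemma inN_orth: "n \<in> {x. f x - x = 0} \<Longrightarrow> b \<in> imgW f \<Longrightarrow> omega n b = 0"
proof -
  assume n: "n \<in> {x. f x - x = 0}" and b: "b \<in> imgW f"
  have "b \<in> operp {x. f x - x = 0}" using b W_eq[OF sf] by simp
  hence "omega b n = 0" using n unfolding operp_def by blast
  thus "omega n b = 0" by (subst omega_anti) simp
qed

lemma star_eq: assumes a: "a \<in> imgW f" and b: "b \<in> imgW f" shows "star f a b = omega (h a) b"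
proof -
  have ex: "\<exists>x. f x - x = a" using a unfolding imgW_def by auto
  define x where "x = (SOME x. f x - x = a)"
  have x: "f x - x = a" unfolding x_def using someI_ex[OF ex] .
  have "f (x - h a) - (x - h a) = (f x - x) - (f (h a) - h a)"
    using lin_f[OF sf] by (simp add: linear_diff algebra_simps)
  also have "\<dots> = 0" using x hinv[OF a] by simp
  finally have "x - h a \<in> {x. f x - x = 0}" by simp
  hence "omega (x - h a) b = 0" using inN_orth b by blast
  hence "omega x b = omega (h a) b" by (simp add: omega_diff_left)
  thus ?thesis unfolding star_def x_def .
qed

lemma Bsym:
  assumes a: "a \<in> lambda0 \<inter> imgW f" and b: "b \<in> lambda0 \<inter> imgW f"
  shows "omega (h a) b = omega (h b) a"
proof -
  define x where "x = h a"
  define y where "y = h b"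
  have ax: "a = f x - x" using hinv a x_def by auto
  have by': "b = f y - y" using hinv b y_def by auto
  have ab: "omega a b = 0" using a b lambda0_iso unfolding operp_def by auto
  have "omega x (f y - y) - omega y (f x - x) + omega (f x - x) (f y - y) = 0"
    using om_f[OF sf, of x y] omega_anti[of y x] omega_anti[of y "f x"]
    by (simp add: omega_diff_left omega_diff_right)
  hence "omega x b - omega y a + omega a b = 0" unfolding ax[symmetric] by'[symmetric] .
  hence "omega x b = omega y a" using ab by simp
  thus ?thesis unfolding x_def y_def .
qed

lemma Brad:
  "{a \<in> lambda0 \<inter> imgW f. \<forall>b\<in>lambda0 \<inter> imgW f. omega (h a) b = 0} = lambda0 \<inter> (\<lambda>x. f x - x) ` lambda0"
proof -
  define S where "S = {x + y |x y. x \<in> (lambda0 :: 'g sympvec set) \<and> y \<in> {x. f x - x = 0}}"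
  have sS: "subspace S" unfolding S_def by (rule subspace_sums[OF lambda0_sub subN[OF sf]])
  have US: "lambda0 \<inter> imgW f = operp S" unfolding S_def by (rule U_eq[OF sf])
  have opU: "operp (lambda0 \<inter> imgW f) = S" unfolding US by (rule operp_operp[OF sS])
  show ?thesis
  proof
    show "{a \<in> lambda0 \<inter> imgW f. \<forall>b\<in>lambda0 \<inter> imgW f. omega (h a) b = 0} \<subseteq> lambda0 \<inter> (\<lambda>x. f x - x) ` lambda0"
    proof
      fix a assume a: "a \<in> {a \<in> lambda0 \<inter> imgW f. \<forall>b\<in>lambda0 \<inter> imgW f. omega (h a) b = 0}"
      hence "h a \<in> operp (lambda0 \<inter> imgW f)" unfolding operp_def by blast
      hence "h a \<in> S" using opU by simp
      then obtain l n where ln: "h a = l + n" "l \<in> lambda0" "f n - n = 0" unfolding S_def by blast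
      have "a = f (h a) - h a" using hinv a by simp
      also have "\<dots> = (f l - l) + (f n - n)" unfolding ln(1) using lin_f[OF sf] by (simp add: linear_add)
      also have "\<dots> = f l - l" using ln(3) by simp
      finally have "a \<in> (\<lambda>x. f x - x) ` lambda0" using ln(2) by blast
      thus "a \<in> lambda0 \<inter> (\<lambda>x. f x - x) ` lambda0" using a by blast
    qed
    show "lambda0 \<inter> (\<lambda>x. f x - x) ` lambda0 \<subseteq> {a \<in> lambda0 \<inter> imgW f. \<forall>b\<in>lambda0 \<inter> imgW f. omega (h a) b = 0}"
    proof
      fix a assume a: "a \<in> lambda0 \<inter> (\<lambda>x. f x - x) ` lambda0"
      then obtain l where l: "l \<in> lambda0" "a = f l - l" by blast
      have aW: "a \<in> imgW f" using l unfolding imgW_def by blast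
      have "f (h a - l) - (h a - l) = (f (h a) - h a) - (f l - l)"
        using lin_f[OF sf] by (simp add: linear_diff algebra_simps)
      also have "\<dots> = 0" using hinv[OF aW] l by simp
      finally have "h a = l + (h a - l)" "h a - l \<in> {x. f x - x = 0}" by simp_all
      hence "h a \<in> S" unfolding S_def using l(1) by blast
      hence "h a \<in> operp (lambda0 \<inter> imgW f)" using opU by simp
      hence "\<forall>b\<in>lambda0 \<inter> imgW f. omega (h a) b = 0" unfolding operp_def by blast
      thus "a \<in> {a \<in> lambda0 \<inter> imgW f. \<forall>b\<in>lambda0 \<inter> imgW f. omega (h a) b = 0}" using a aW by blast
    qed
  qed
qed

lemma sgn_det: "sgn_det_star f = 1 \<or> sgn_det_star f = -1"
proof -
  obtain w0 where "basis_list (imgW f) w0" using bl_exists[OF subW[OF sf]] by blast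
  define w where "w = (SOME w. basis_list (imgW f) w)"
  have w: "basis_list (imgW f) w" unfolding w_def by (rule someI) fact
  define m where "m = length w"
  have wW: "w ! i \<in> imgW f" if "i < m" for i using bl_set[OF w] that m_def by auto
  have "ldet m (\<lambda>i j. star f (w ! i) (w ! j)) \<noteq> 0"
  proof (rule ldet_nz)
    fix v assume hv: "\<forall>i<m. (\<Sum>j<m. star f (w ! i) (w ! j) * v j) = 0"
    define b where "b = (\<Sum>j<m. v j *\<^sub>R w ! j)"
    have bW: "b \<in> imgW f" unfolding b_def m_def by (rule bl_sum_in[OF w])
    have oh: "omega (h (w ! i)) b = 0" if "i < m" for i
    proof -
      have "omega (h (w ! i)) b = (\<Sum>j<m. star f (w ! i) (w ! j) * v j)"
        unfolding b_def using wW that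
        by (simp add: omega_sum_right omega_scale_right star_eq mult.commute)
      thus ?thesis using hv that by simp
    qed
    have "omega x b = 0" for x
    proof -
      have "f x - x \<in> imgW f" unfolding imgW_def by blast
      then obtain e where e: "f x - x = (\<Sum>i<m. e i *\<^sub>R w ! i)" using bl_span[OF w] m_def by blast
      define z where "z = x - (\<Sum>i<m. e i *\<^sub>R h (w ! i))"
      have "f z - z = (f x - x) - (\<Sum>i<m. e i *\<^sub>R (f (h (w ! i)) - h (w ! i)))"
        unfolding z_def using lin_f[OF sf]
        by (simp add: linear_diff linear_sum linear_scale algebra_simps sum_subtractf scaleR_diff_right)
      also have "(\<Sum>i<m. e i *\<^sub>R (f (h (w ! i)) - h (w ! i))) = (\<Sum>i<m. e i *\<^sub>R w ! i)"
        using hinv wW by (intro sum.cong) auto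
      finally have "z \<in> {x. f x - x = 0}" using e by simp
      hence "omega z b = 0" using inN_orth bW by blast
      moreover have "x = z + (\<Sum>i<m. e i *\<^sub>R h (w ! i))" unfolding z_def by simp
      ultimately show ?thesis using oh by (simp add: omega_add_left omega_sum_left omega_scale_left)
    qed
    hence "omega b x = 0" for x by (subst omega_anti) simp
    hence "b = 0" by (rule omega_nondeg)
    thus "\<forall>j<m. v j = 0" using bl_indep[OF w] unfolding b_def m_def by blast
  qed
  thus ?thesis unfolding sgn_det_star_def Let_def w_def[symmetric] m_def[symmetric] by auto
qed

end



theorem proposition4p1:
  fixes f :: "'g::finite sympvec \<Rightarrow> 'g sympvec"
  assumes "symplectic f"
  shows "(s_of f) ^ 2 = (-1::complex) powi (n_of f)"
proof -
  note sf = assms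
  obtain h where h: "linear h" "\<forall>v\<in>(\<lambda>x. f x - x) ` UNIV. f (h v) - h v = v"
    using linear_exists_right_inverse_on[OF lin_d[OF sf] subspace_UNIV] by auto
  have hinv: "\<And>v. v \<in> imgW f \<Longrightarrow> f (h v) - h v = v" using h(2) unfolding imgW_def by auto
  define U where "U = lambda0 \<inter> imgW f"
  define B where "B = (\<lambda>a b. omega (h a) b)"
  have sU: "subspace U" unfolding U_def by (rule subspace_inter[OF lambda0_sub subW[OF sf]])
  have linl: "linear (\<lambda>x. B x y)" for y
    using linear_compose[OF h(1) linear_omega_left[of y]] unfolding B_def o_def .
  have linr: "linear (B x)" for x unfolding B_def by (rule linear_omega_right)
  have sym: "B x y = B y x" if "x \<in> U" "y \<in> U" for x y
    unfolding B_def by (rule Bsym[OF sf h(1) hinv]) (use that U_def in simp_all)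
  define PB where "PB = {dim S | S. subspace S \<and> S \<subseteq> U \<and> (\<forall>x\<in>S. x \<noteq> 0 \<longrightarrow> B x x > 0)}"
  define NB where "NB = {dim S | S. subspace S \<and> S \<subseteq> U \<and> (\<forall>x\<in>S. x \<noteq> 0 \<longrightarrow> B x x < 0)}"
  have syl: "Max PB + Max NB + dim {x\<in>U. \<forall>y\<in>U. B x y = 0} = dim U"
    unfolding PB_def NB_def by (rule sylvester[OF sU linl linr sym])
  have rad: "{x\<in>U. \<forall>y\<in>U. B x y = 0} = lambda0 \<inter> (\<lambda>x. f x - x) ` lambda0"
    unfolding U_def B_def by (rule Brad[OF sf h(1) hinv])
  have sB: "star f x x = B x x" if "x \<in> U" for x
    unfolding B_def by (rule star_eq[OF sf h(1) hinv]) (use that U_def in simp_all)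
  have q1: "(\<forall>x\<in>S. x \<noteq> 0 \<longrightarrow> star f x x > 0) = (\<forall>x\<in>S. x \<noteq> 0 \<longrightarrow> B x x > 0)"
    if "S \<subseteq> U" for S using sB that by (auto simp: subset_iff)
  have q2: "(\<forall>x\<in>S. x \<noteq> 0 \<longrightarrow> star f x x < 0) = (\<forall>x\<in>S. x \<noteq> 0 \<longrightarrow> B x x < 0)"
    if "S \<subseteq> U" for S using sB that by (auto simp: subset_iff)
  have eqc: "(subspace S \<and> S \<subseteq> U \<and> (\<forall>x\<in>S. x \<noteq> 0 \<longrightarrow> star f x x > 0)) =
             (subspace S \<and> S \<subseteq> U \<and> (\<forall>x\<in>S. x \<noteq> 0 \<longrightarrow> B x x > 0))" for S
    using q1[of S] by blast
  have eqc2: "(subspace S \<and> S \<subseteq> U \<and> (\<forall>x\<in>S. x \<noteq> 0 \<longrightarrow> star f x x < 0)) =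
             (subspace S \<and> S \<subseteq> U \<and> (\<forall>x\<in>S. x \<noteq> 0 \<longrightarrow> B x x < 0))" for S
    using q2[of S] by blast
  have sig: "signature (star f) U = int (Max PB) - int (Max NB)"
    unfolding signature_def PB_def NB_def by (simp only: eqc eqc2)
  define g where "g = CARD('g)"
  define k where "k = dim (lambda0 \<inter> f ` lambda0)"
  have "dim (lambda0 \<inter> f ` lambda0) \<le> dim (lambda0 :: 'g sympvec set)" by (rule dim_subset[OF Int_lower1])
  hence kg: "k \<le> g" unfolding k_def g_def using dim_lambda0[where 'g='g] by simp
  have e1: "dim (imgW f) + dim {x. f x - x = 0} = 2 * g" using dimWN[OF sf] g_def by simp
  have e2: "dim U + dim {x. f x - x = 0} = g + dim (lambda0 \<inter> {x. f x - x = 0})"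
    using dimU[OF sf] g_def U_def by simp
  have e3: "dim (lambda0 \<inter> (\<lambda>x. f x - x) ` lambda0) + dim (lambda0 \<inter> {x. f x - x = 0}) = k"
    using dimR[OF sf] k_def by simp
  have e4: "Max PB + Max NB + dim (lambda0 \<inter> (\<lambda>x. f x - x) ` lambda0) = dim U" using syl rad by simp
  have nf: "n_of f = (int (Max PB) - int (Max NB)) - int (dim (imgW f)) - sgn_det_star f + 1"
    unfolding n_of_def using sig U_def by simp
  have i1: "int (dim (imgW f)) + int (dim {x. f x - x = 0}) = 2 * int g"
    using arg_cong[OF e1, of int] by simp
  have i2: "int (dim U) + int (dim {x. f x - x = 0}) = int g + int (dim (lambda0 \<inter> {x. f x - x = 0}))"
    using arg_cong[OF e2, of int] by simp
  have i3: "int (dim (lambda0 \<inter> (\<lambda>x. f x - x) ` lambda0)) + int (dim (lambda0 \<inter> {x. f x - x = 0})) = int k"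
    using arg_cong[OF e3, of int] by simp
  have i4: "int (Max PB) + int (Max NB) + int (dim (lambda0 \<inter> (\<lambda>x. f x - x) ` lambda0)) = int (dim U)"
    using arg_cong[OF e4, of int] by simp
  have i5: "int (g - k) = int g - int k" using kg by simp
  define lN where "lN = int (dim (lambda0 \<inter> {x. f x - x = 0}))"
  define dN where "dN = int (dim {x. f x - x = 0})"
  define r where "r = int (dim (lambda0 \<inter> (\<lambda>x. f x - x) ` lambda0))"
  define dW where "dW = int (dim (imgW f))"
  define dU where "dU = int (dim U)"
  define p where "p = int (Max PB)"
  define q where "q = int (Max NB)"
  define sd where "sd = sgn_det_star f"
  have j1: "dW + dN = 2 * int g" using i1 dW_def dN_def by simp
  have j2: "dU + dN = int g + lN" using i2 dU_def dN_def lN_def by simp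
  have j3: "r + lN = int k" using i3 r_def lN_def by simp
  have j4: "p + q + r = dU" using i4 p_def q_def r_def dU_def by simp
  have j5: "n_of f = p - q - dW - sd + 1" using nf p_def q_def dW_def sd_def by simp
  have j6: "sd = 1 \<or> sd = -1" using sgn_det[OF sf h(1) hinv] sd_def by simp
  have "n_of f = int (g - k) + 2 * (lN - q - int g + (1 - sd) div 2)"
    using j1 j2 j3 j4 j5 j6 i5 by auto
  then obtain t where t: "n_of f = int (g - k) + 2 * t" by blast
  obtain a0 where "basis_list (lambda0 :: 'g sympvec set) a0" using bl_exists[OF lambda0_sub] by blast
  define a where "a = (SOME a. basis_list (lambda0 :: 'g sympvec set) a)"
  have a: "basis_list lambda0 a" unfolding a_def by (rule someI) fact
  have la: "length a = dim (lambda0 :: 'g sympvec set)" by (rule bl_length[OF a])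
  have lb: "length (map f a) = dim (f ` lambda0)" using la dim_fL[OF sf] dim_lambda0 by simp
  have "eps lambda0 a (f ` lambda0) (map f a) = 1 \<or> eps lambda0 a (f ` lambda0) (map f a) = -1"
    by (rule eps_pm[OF operp_lambda0 fL_lag[OF sf] la bl_set[OF a] bl_iindep[OF a] lb])
       (use bl_set[OF a] iindep_map[OF bl_iindep[OF a] lin_f[OF sf] inj_f[OF sf]] in auto)
  hence esq: "(complex_of_real (eps lambda0 a (f ` lambda0) (map f a)))^2 = 1" by auto
  have "s_of f = \<i> ^ (g - k) * complex_of_real (eps lambda0 a (f ` lambda0) (map f a))"
    unfolding s_of_def s_lag_def Let_def a_def[symmetric] using dim_lambda0[where 'g='g] g_def k_def by simp
  hence "(s_of f)^2 = (\<i> ^ (g - k))^2 * 1" using esq by (simp add: power_mult_distrib)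
  also have "\<dots> = (-1) ^ (g - k)" by (simp add: power_mult[symmetric] mult.commute[of _ 2] power_mult)
  also have "\<dots> = (-1::complex) powi (n_of f)" unfolding t by (rule minus_one_powi[symmetric])
  finally show ?thesis .
qed

end
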